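(* Let $\nu$ be a finite measure on the Borel subsets of $(0,\infty)$. For $\Re(z)\ge0$ let $\Psi_\nu(z)=\int_0^\infty e^{-\lambda z}\,\mathrm{d}\nu(\lambda)$, and for $z\in\mathbb{C}$ let $K^\star_\nu(z)=\int_0^\infty K(\lambda,z)\,\mathrm{d}\nu(\lambda)$, where $K(\lambda, z) = \left(\frac{\cos \pi z}{\pi}\right)\sum_{n \in \mathbb{Z}} \frac{ (-1)^{n}\, e^{-\lambda|n- \frac{1}{2}|}}{z - n + \frac{1}{2}}$. If $0<\beta<\frac12$, then for every $z$ with $\Re(z)>\beta$, $$\Psi_\nu(z)-K^\star_\nu(z)=\frac{1}{2\pi i}\int_{\beta-i\infty}^{\beta+i\infty}\left(\frac{\cos\pi z}{\cos\pi w}\right)\left(\frac{2w}{z^2-w^2}\right)\Psi_\nu(w)\,\mathrm{d}w.$$ *)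

theory Defs
  imports "HOL-Analysis.Analysis"
begin

definition Psi_nu :: "real measure \<Rightarrow> complex \<Rightarrow> complex" where
  "Psi_nu \<nu> z = (LINT l|\<nu>. exp (- (complex_of_real l * z)))"

text \<open>The factor cos(pi z)/(z - n + 1/2) is given its continuous (removable-singularity)
  value -pi sin(pi (n - 1/2)) at z = n - 1/2, so that K(lambda, .) is entire.\<close>
definition K_term :: "real \<Rightarrow> complex \<Rightarrow> int \<Rightarrow> complex" where
  "K_term l z n =
     (let a = complex_of_int n - 1/2 in
       (if z = a then - complex_of_real pi * sin (complex_of_real pi * a)
        else cos (complex_of_real pi * z) / (z - a)) / complex_of_real pi
       * ((-1) powi n)
       * complex_of_real (exp (- l * \<bar>real_of_int n - 1/2\<bar>)))"

definition K_ker :: "real \<Rightarrow> complex \<Rightarrow> complex" where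
  "K_ker l z = (\<Sum>\<^sub>\<infinity>n::int. K_term l z n)"

definition K_star :: "real measure \<Rightarrow> complex \<Rightarrow> complex" where
  "K_star \<nu> z = (LINT l|\<nu>. K_ker l z)"

definition contour_integrand :: "real measure \<Rightarrow> complex \<Rightarrow> complex \<Rightarrow> complex" where
  "contour_integrand \<nu> z w =
     (cos (complex_of_real pi * z) / cos (complex_of_real pi * w))
     * (2 * w / (z\<^sup>2 - w\<^sup>2)) * Psi_nu \<nu> w"

end

theory Submission imports Defs "HOL-Complex_Analysis.Complex_Analysis" "HOL-Real_Asymp.Real_Asymp" "HOL-Probability.Sinc_Integral"
begin

lemma integrable_exp_abs:
  fixes a :: real assumes a: "0 < a"
  shows "integrable lborel (\<lambda>x::real. exp (- a * \<bar>x\<bar>))"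
proof -
  define h where "h = (\<lambda>x::real. indicator {0<..} x *\<^sub>R exp (-(x*a)))"
  have h1: "integrable lborel h"
    using integrable_I0i_exp_mscale[OF a] unfolding set_integrable_def h_def .
  have h2: "integrable lborel (\<lambda>x. h (0 + (-1) * x))"
    using lborel_integrable_real_affine_iff[of "-1" h 0] h1 by simp
  have i: "integrable lborel (\<lambda>x. h x + h (0 + (-1) * x))"
    using h1 h2 by (rule Bochner_Integration.integrable_add)
  have ae:  "AE x in lborel. h x + h (0 + (-1) * x) = exp (- a * \<bar>x\<bar>)"
    using AE_lborel_singleton[of 0]
    by eventually_elim (auto simp: h_def indicator_def abs_if mult.commute)
  have m: "(\<lambda>x::real. exp (- a * \<bar>x\<bar>)) \<in> borel_measurable lborel" by measurable
  show ?thesis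
    by (rule integrable_cong_AE_imp[OF i m ae])
qed

lemma norm_cos_ge:
  "norm (cos (Complex x y)) \<ge> \<bar>cos x\<bar> * ((exp y + exp (-y))/2)"
proof -
  have sq: "norm (cos (Complex x y)) ^ 2 = cos x ^ 2 + (exp y - exp (-y)) ^ 2 / 4"
    using norm_cos_squared[of "Complex x y"] by (simp add: exp_minus)
  have e: "exp y * exp (-y) = 1" by (simp add: exp_minus field_simps)
  have c: "cos x ^ 2 \<le> 1" using abs_cos_le_one[of x] by (simp add: abs_square_le_1)
  have k: "((exp y + exp (-y))/2) ^ 2 = (exp y - exp (-y)) ^ 2 / 4 + 1"
    by (simp add: power2_eq_square field_simps e)
  have "(\<bar>cos x\<bar> * ((exp y + exp (-y))/2)) ^ 2 = cos x ^ 2 * ((exp y + exp (-y))/2) ^ 2"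
    by (simp only: power_mult_distrib power2_abs)
  also have "\<dots> = cos x ^ 2 * ((exp y - exp (-y)) ^ 2 / 4) + cos x ^ 2"
    unfolding k by (simp add: algebra_simps)
  also have "\<dots> \<le> (exp y - exp (-y)) ^ 2 / 4 + cos x ^ 2"
    using c by (intro add_right_mono mult_left_le_one_le) auto
  finally have "(\<bar>cos x\<bar> * ((exp y + exp (-y))/2)) ^ 2 \<le> norm (cos (Complex x y)) ^ 2"
    using sq by simp
  thus ?thesis by (rule power2_le_imp_le) simp
qed

lemma norm_cos_ge2:
  "norm (cos (Complex x y)) \<ge> \<bar>exp y - exp (-y)\<bar> / 2"
proof -
  have sq: "norm (cos (Complex x y)) ^ 2 = cos x ^ 2 + (exp y - exp (-y)) ^ 2 / 4"
    using norm_cos_squared[of "Complex x y"] by (simp add: exp_minus)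
  have "(\<bar>exp y - exp (-y)\<bar> / 2) ^ 2 \<le> norm (cos (Complex x y)) ^ 2"
    unfolding sq by (simp add: power_divide power2_abs)
  thus ?thesis by (rule power2_le_imp_le) simp
qed

lemma cosh_ge_exp_abs: "exp \<bar>y\<bar> / 2 \<le> (exp y + exp (-y::real)) / 2"
  by (cases "y \<ge> 0") auto

definition gg :: "complex \<Rightarrow> real \<Rightarrow> complex \<Rightarrow> complex" where
  "gg z l w = (cos (complex_of_real pi * z) / cos (complex_of_real pi * w))
     * (2 * w / (z\<^sup>2 - w\<^sup>2)) * exp (- (complex_of_real l * w))"

lemma rat_bound:
  assumes "Re w = c" "0 < c" "0 < Re z" "Re z \<noteq> c"
  shows "norm (2*w/(z\<^sup>2 - w\<^sup>2)) \<le> 2/\<bar>Re z - c\<bar> + 2*norm z/(\<bar>Re z - c\<bar>*(Re z + c))"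
proof -
  define d where "d = \<bar>Re z - c\<bar>"
  have d: "d > 0" using assms by (simp add: d_def)
  have n1: "norm (z - w) \<ge> d" unfolding d_def using abs_Re_le_cmod[of "z - w"] assms by simp
  have n2: "norm (z + w) \<ge> Re z + c" using complex_Re_le_cmod[of "z + w"] assms by simp
  have n2p: "Re z + c > 0" using assms by simp
  have nw: "norm (2*w) \<le> 2 * (norm (z + w) + norm z)"
    using norm_triangle_ineq4[of "z + w" z] by simp
  have fac: "z\<^sup>2 - w\<^sup>2 = (z - w) * (z + w)" by (simp add: power2_eq_square algebra_simps)
  have "norm (2*w/(z\<^sup>2 - w\<^sup>2)) = norm (2*w) / (norm (z - w) * norm (z + w))"
    by (simp add: fac norm_divide norm_mult)
  also have "\<dots> \<le> 2 * (norm (z + w) + norm z) / (norm (z - w) * norm (z + w))"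
    using nw n1 n2 n2p d by (intro divide_right_mono) auto
  also have "\<dots> = 2 / norm (z - w) + 2 * norm z / (norm (z - w) * norm (z + w))"
  proof -
    have a: "norm (z - w) \<noteq> 0" "norm (z + w) \<noteq> 0" using n1 n2 n2p d by linarith+
    thus ?thesis by (simp add: field_simps)
  qed
  also have "\<dots> \<le> 2 / d + 2 * norm z / (d * (Re z + c))"
    using n1 n2 n2p d
    by (intro add_mono divide_left_mono mult_mono frac_le) (auto intro: mult_pos_pos)
  finally show ?thesis unfolding d_def .
qed

lemma cos_line:
  "norm (cos (complex_of_real pi * Complex c t)) \<ge> \<bar>cos (pi*c)\<bar> * (exp (pi*\<bar>t\<bar>)/2)"
proof -
  have "complex_of_real pi * Complex c t = Complex (pi*c) (pi*t)"
    by (simp add: complex_eq_iff)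
  moreover have "\<bar>pi*t\<bar> = pi*\<bar>t\<bar>" by (simp add: abs_mult)
  ultimately show ?thesis
    using norm_cos_ge[of "pi*c" "pi*t"] cosh_ge_exp_abs[of "pi*t"]
    by (smt (verit, best) abs_ge_zero mult_left_mono)
qed

lemma vline_bound:
  assumes "0 < c" "cos (pi*c) \<noteq> 0" "0 < Re z" "Re z \<noteq> c"
  defines "M \<equiv> 2/\<bar>Re z - c\<bar> + 2*norm z/(\<bar>Re z - c\<bar>*(Re z + c))"
  shows "norm (gg z l (Complex c t)) \<le>
     norm (cos (complex_of_real pi * z)) * (2/\<bar>cos (pi*c)\<bar>) * M * exp (-l*c) * exp (-pi*\<bar>t\<bar>)"
proof -
  let ?w = "Complex c t"
  have cb: "norm (cos (complex_of_real pi * ?w)) \<ge> \<bar>cos (pi*c)\<bar> * (exp (pi*\<bar>t\<bar>)/2)"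
    by (rule cos_line)
  have cpos: "\<bar>cos (pi*c)\<bar> * (exp (pi*\<bar>t\<bar>)/2) > 0" using assms(2) by simp
  have inv: "1 / norm (cos (complex_of_real pi * ?w)) \<le> (2/\<bar>cos (pi*c)\<bar>) * exp (-pi*\<bar>t\<bar>)"
  proof -
    have "1 / norm (cos (complex_of_real pi * ?w)) \<le> 1 / (\<bar>cos (pi*c)\<bar> * (exp (pi*\<bar>t\<bar>)/2))"
      using cb cpos by (intro divide_left_mono mult_pos_pos) auto
    also have "\<dots> = (2/\<bar>cos (pi*c)\<bar>) * exp (-pi*\<bar>t\<bar>)"
      by (simp add: exp_minus field_simps)
    finally show ?thesis .
  qed
  have r: "norm (2*?w/(z\<^sup>2 - ?w\<^sup>2)) \<le> M"
    unfolding M_def by (rule rat_bound) (use assms in auto)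
  have e: "norm (exp (- (complex_of_real l * ?w))) = exp (-l*c)" by simp
  have "norm (gg z l ?w) = norm (cos (complex_of_real pi * z)) * (1 / norm (cos (complex_of_real pi * ?w)))
          * norm (2*?w/(z\<^sup>2 - ?w\<^sup>2)) * exp (-l*c)"
    unfolding gg_def by (simp add: norm_mult norm_divide e)
  also have "\<dots> \<le> norm (cos (complex_of_real pi * z)) * ((2/\<bar>cos (pi*c)\<bar>) * exp (-pi*\<bar>t\<bar>)) * M * exp (-l*c)"
    by (intro mult_right_mono mult_mono mult_left_mono inv r) auto
  finally show ?thesis by (simp add: algebra_simps)
qed

lemma gg_line_cont:
  assumes "0 < c" "cos (pi*c) \<noteq> 0" "0 < Re z" "Re z \<noteq> c"
  shows "continuous_on UNIV (\<lambda>t. gg z l (Complex c t))"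
proof -
  have c1: "cos (complex_of_real pi * Complex c t) \<noteq> 0" for t
  proof -
    have "0 < \<bar>cos (pi*c)\<bar> * (exp (pi*\<bar>t\<bar>)/2)" using assms(2) by simp
    hence "norm (cos (complex_of_real pi * Complex c t)) > 0"
      using cos_line[of c t] by linarith
    thus ?thesis by auto
  qed
  have c2: "z\<^sup>2 - (Complex c t)\<^sup>2 \<noteq> 0" for t
  proof
    assume "z\<^sup>2 - (Complex c t)\<^sup>2 = 0"
    hence "(z - Complex c t) * (z + Complex c t) = 0" by (simp add: power2_eq_square algebra_simps)
    hence "z = Complex c t \<or> z = - Complex c t" by (auto simp: add_eq_0_iff2)
    thus False using assms by auto
  qed
  have e: "(\<lambda>t. gg z l (Complex c t)) = (\<lambda>t. gg z l (of_real c + \<i> * of_real t))"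
    by (simp add: Complex_eq)
  have c1': "cos (complex_of_real pi * (of_real c + \<i> * of_real t)) \<noteq> 0" for t
    using c1[of t] by (simp add: Complex_eq)
  have c2': "z\<^sup>2 - (of_real c + \<i> * of_real t)\<^sup>2 \<noteq> 0" for t
    using c2[of t] by (simp add: Complex_eq)
  show ?thesis unfolding gg_def
    by (intro continuous_intros) (use c1 c2 in auto)
qed

lemma gg_line_integrable:
  assumes "0 < c" "cos (pi*c) \<noteq> 0" "0 < Re z" "Re z \<noteq> c"
  shows "integrable lborel (\<lambda>t. gg z l (Complex c t))"
proof (rule Bochner_Integration.integrable_bound)
  let ?K = "norm (cos (complex_of_real pi * z)) * (2/\<bar>cos (pi*c)\<bar>) *
      (2/\<bar>Re z - c\<bar> + 2*norm z/(\<bar>Re z - c\<bar>*(Re z + c))) * exp (-l*c)"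
  show "integrable lborel (\<lambda>t. ?K * exp (-pi*\<bar>t\<bar>))"
    using integrable_exp_abs[of pi] by simp
  show "(\<lambda>t. gg z l (Complex c t)) \<in> borel_measurable lborel"
    using borel_measurable_continuous_onI[OF gg_line_cont[OF assms]] by simp
  have K0: "?K \<ge> 0" using assms
    by (intro mult_nonneg_nonneg add_nonneg_nonneg divide_nonneg_nonneg) auto
  show "AE t in lborel. norm (gg z l (Complex c t)) \<le> norm (?K * exp (-pi*\<bar>t\<bar>))"
  proof (rule AE_I2)
    fix t
    have "norm (?K * exp (-pi*\<bar>t\<bar>)) = ?K * exp (-pi*\<bar>t\<bar>)"
      unfolding real_norm_def by (rule abs_of_nonneg) (intro mult_nonneg_nonneg K0, simp)
    show "norm (gg z l (Complex c t)) \<le> norm (?K * exp (-pi*\<bar>t\<bar>))"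
      unfolding \<open>norm (?K * exp (-pi*\<bar>t\<bar>)) = ?K * exp (-pi*\<bar>t\<bar>)\<close> by (rule vline_bound[OF assms])
  qed
qed

lemma hline_bound:
  assumes "\<bar>Im w\<bar> = T" "T > \<bar>Im z\<bar>" "0 \<le> Re w" "Re w \<le> R" "0 \<le> l"
  shows "norm (gg z l w) \<le> norm (cos (complex_of_real pi * z)) * (2/(exp (pi*T) - exp (-pi*T)))
           * (2*(R+T)/(T - \<bar>Im z\<bar>)\<^sup>2)"
proof -
  have T0: "T > 0" using assms(2) by linarith
  have epos: "exp (pi*T) - exp (-pi*T) > 0" using T0 by simp
  have pw: "complex_of_real pi * w = Complex (pi * Re w) (pi * Im w)" by (simp add: complex_eq_iff)
  have "\<bar>exp (pi * Im w) - exp (-(pi * Im w))\<bar> = exp (pi*T) - exp (-pi*T)"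
  proof (cases "Im w \<ge> 0")
    case True thus ?thesis using assms(1) T0 by (simp)
  next
    case False hence "Im w = -T" using assms(1) by linarith
    thus ?thesis using T0 by simp
  qed
  hence cb: "norm (cos (complex_of_real pi * w)) \<ge> (exp (pi*T) - exp (-pi*T)) / 2"
    using norm_cos_ge2[where x="pi * Re w" and y="pi * Im w"] pw by simp
  have inv: "1 / norm (cos (complex_of_real pi * w)) \<le> 2/(exp (pi*T) - exp (-pi*T))"
  proof -
    have "1 / norm (cos (complex_of_real pi * w)) \<le> 1 / ((exp (pi*T) - exp (-pi*T)) / 2)"
      using cb epos by (intro divide_left_mono mult_pos_pos) auto
    thus ?thesis by simp
  qed
  define d where "d = T - \<bar>Im z\<bar>"
  have d: "d > 0" using assms(2) by (simp add: d_def)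
  have i1: "\<bar>Im z - Im w\<bar> \<le> norm (z - w)" using abs_Im_le_cmod[of "z - w"] by simp
  have i2: "\<bar>Im z + Im w\<bar> \<le> norm (z + w)" using abs_Im_le_cmod[of "z + w"] by simp
  have n1: "norm (z - w) \<ge> d"
    using i1 assms(1) unfolding d_def by arith
  have n2: "norm (z + w) \<ge> d"
    using i2 assms(1) unfolding d_def by arith
  have nw: "norm (2*w) \<le> 2*(R+T)"
    using cmod_le[of w] assms by simp
  have fac: "z\<^sup>2 - w\<^sup>2 = (z - w) * (z + w)" by (simp add: power2_eq_square algebra_simps)
  have r: "norm (2*w/(z\<^sup>2 - w\<^sup>2)) \<le> 2*(R+T)/d\<^sup>2"
  proof -
    have "norm (2*w/(z\<^sup>2 - w\<^sup>2)) = norm (2*w) / (norm (z - w) * norm (z + w))"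
      by (simp add: fac norm_divide norm_mult)
    also have "\<dots> \<le> 2*(R+T) / (d * d)"
      using nw n1 n2 d assms T0 by (intro frac_le mult_mono) auto
    finally show ?thesis by (simp add: power2_eq_square)
  qed
  have e: "norm (exp (- (complex_of_real l * w))) \<le> 1" using assms by simp
  have "norm (gg z l w) = norm (cos (complex_of_real pi * z)) * (1 / norm (cos (complex_of_real pi * w)))
          * norm (2*w/(z\<^sup>2 - w\<^sup>2)) * norm (exp (- (complex_of_real l * w)))"
    unfolding gg_def by (simp add: norm_mult norm_divide)
  also have "\<dots> \<le> norm (cos (complex_of_real pi * z)) * (2/(exp (pi*T) - exp (-pi*T)))
          * (2*(R+T)/d\<^sup>2) * 1"
    using T0 d assms by (intro mult_mono inv r e mult_nonneg_nonneg) auto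
  finally show ?thesis unfolding d_def by simp
qed

definition AA :: "complex \<Rightarrow> real \<Rightarrow> complex \<Rightarrow> complex" where
  "AA z l w = cos (complex_of_real pi * z) * (2 * w) * exp (- (complex_of_real l * w))"
definition BB :: "complex \<Rightarrow> complex \<Rightarrow> complex" where
  "BB z w = cos (complex_of_real pi * w) * (z\<^sup>2 - w\<^sup>2)"

lemma gg_AB: "gg z l = (\<lambda>w. AA z l w / BB z w)"
proof
  fix w
  show "gg z l w = AA z l w / BB z w"
  proof (cases "BB z w = 0")
    case True
    hence "cos (complex_of_real pi * w) = 0 \<or> z\<^sup>2 - w\<^sup>2 = 0" by (simp add: BB_def)
    thus ?thesis using True by (auto simp: gg_def)
  next
    case False
    hence "cos (complex_of_real pi * w) \<noteq> 0" "z\<^sup>2 - w\<^sup>2 \<noteq> 0" by (auto simp: BB_def)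
    thus ?thesis by (simp add: gg_def AA_def BB_def field_simps)
  qed
qed

lemma cos_pi_zero_iff: "cos (complex_of_real pi * w) = 0 \<longleftrightarrow> (\<exists>n::int. w = of_int n - 1/2)"
proof -
  have "cos (complex_of_real pi * w) = 0 \<longleftrightarrow> (\<exists>n::int. complex_of_real pi * w = complex_of_real (real_of_int n * pi) + complex_of_real pi / 2)"
    by (rule cos_eq_0)
  also have "\<dots> \<longleftrightarrow> (\<exists>n::int. w = of_int (n+1) - 1/2)"
  proof -
    have "complex_of_real pi * w = complex_of_real (real_of_int n * pi) + complex_of_real pi / 2
          \<longleftrightarrow> w = of_int (n+1) - 1/2" for n :: int
    proof -
      have "complex_of_real (real_of_int n * pi) + complex_of_real pi / 2 = complex_of_real pi * (of_int (n+1) - 1/2)"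
        by (simp add: algebra_simps)
      thus ?thesis by simp
    qed
    thus ?thesis by simp
  qed
  also have "\<dots> \<longleftrightarrow> (\<exists>n::int. w = of_int n - 1/2)"
  proof
    assume "\<exists>n::int. w = of_int (n+1) - 1/2" thus "\<exists>n::int. w = of_int n - 1/2" by blast
  next
    assume "\<exists>n::int. w = of_int n - 1/2"
    then obtain n::int where "w = of_int n - 1/2" by blast
    hence "w = of_int ((n - 1) + 1) - 1/2" by simp
    thus "\<exists>n::int. w = of_int (n+1) - 1/2" by blast
  qed
  finally show ?thesis .
qed

lemma rect_residue:
  fixes N :: nat
  assumes b: "0 < \<beta>" "\<beta> < 1/2" "\<beta> < Re z" and cz: "cos (complex_of_real pi * z) \<noteq> 0"
    and zN: "Re z < real N" and zT: "\<bar>Im z\<bar> < T"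
  shows "continuous_on (path_image (rectpath (Complex \<beta> (-T)) (Complex (real N) T))) (gg z l) \<and>
     contour_integral (rectpath (Complex \<beta> (-T)) (Complex (real N) T)) (gg z l) =
     2*pi*\<i> * (residue (gg z l) z + (\<Sum>m\<in>{1..N}. residue (gg z l) (of_nat m - 1/2)))"
proof -
  define a1 where "a1 = Complex \<beta> (-T)"
  define a3 where "a3 = Complex (real N) T"
  define S where "S = box (Complex (\<beta>/2) (-T-1)) (Complex (real N + 1/4) (T+1))"
  define H where "H = (\<lambda>m::nat. (of_nat m - 1/2 :: complex))"
  define pts where "pts = insert z (H ` {1..N})"
  have T0: "T > 0" using zT by linarith
  have ptsbox: "p \<in> box a1 a3" if "p \<in> pts" for p
  proof -
    have "p = z \<or> (\<exists>m\<in>{1..N}. p = H m)" using that by (auto simp: pts_def)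
    thus ?thesis
    proof
      assume "p = z" thus ?thesis using b zN zT by (auto simp: in_box_complex_iff a1_def a3_def)
    next
      assume "\<exists>m\<in>{1..N}. p = H m"
      then obtain m where m: "m \<in> {1..N}" "p = H m" by blast
      have "real m \<ge> 1" "real m \<le> real N" using m(1) by auto
      thus ?thesis using m b T0 by (auto simp: in_box_complex_iff a1_def a3_def H_def)
    qed
  qed
  have cboxS: "cbox a1 a3 \<subseteq> S"
    using b T0 by (auto simp: in_box_complex_iff in_cbox_complex_iff a1_def a3_def S_def)
  have Bnz: "BB z w \<noteq> 0" if "w \<in> S - pts" for w
  proof
    assume "BB z w = 0"
    hence "cos (complex_of_real pi * w) = 0 \<or> (z - w) * (z + w) = 0"
      by (auto simp: BB_def power2_eq_square algebra_simps)
    thus False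
    proof
      assume "cos (complex_of_real pi * w) = 0"
      then obtain n::int where n: "w = of_int n - 1/2" using cos_pi_zero_iff by blast
      have "\<beta>/2 < Re w" "Re w < real N + 1/4" using that by (auto simp: S_def in_box_complex_iff)
      hence "\<beta>/2 < real_of_int n - 1/2" "real_of_int n - 1/2 < real N + 1/4" using n by auto
      hence n1: "n \<ge> 1" "n \<le> int N" using b by linarith+
      hence "w = H (nat n)" using n by (simp add: H_def)
      moreover have "nat n \<in> {1..N}" using n1 by auto
      ultimately have "w \<in> pts" by (auto simp: pts_def)
      thus False using that by auto
    next
      assume "(z - w) * (z + w) = 0"
      hence "w = z \<or> w = -z" by (auto simp: add_eq_0_iff2)
      moreover have "w \<noteq> z" using that by (auto simp: pts_def)
      moreover have "\<beta>/2 < Re w" using that by (auto simp: S_def in_box_complex_iff)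
      ultimately show False using b by auto
    qed
  qed
  have holo: "gg z l holomorphic_on S - pts"
    unfolding gg_AB AA_def BB_def
    by (intro holomorphic_intros) (use Bnz in \<open>auto simp: BB_def\<close>)
  have pimg: "path_image (rectpath a1 a3) \<subseteq> S - pts"
  proof -
    have le: "Re a1 \<le> Re a3" "Im a1 \<le> Im a3" using b zN T0 by (auto simp: a1_def a3_def)
    have "path_image (rectpath a1 a3) \<subseteq> cbox a1 a3" by (rule path_image_rectpath_subset_cbox[OF le])
    moreover have "path_image (rectpath a1 a3) \<inter> pts = {}"
      using path_image_rectpath_inter_box[OF le] ptsbox by blast
    ultimately show ?thesis using cboxS by blast
  qed
  have homo: "\<forall>w. w \<notin> S \<longrightarrow> winding_number (rectpath a1 a3) w = 0"
  proof (intro allI impI)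
    fix w assume "w \<notin> S"
    hence "w \<notin> cbox a1 a3" using cboxS by blast
    moreover have "Re a1 \<le> Re a3" "Im a1 \<le> Im a3" using b zN T0 by (auto simp: a1_def a3_def)
    ultimately show "winding_number (rectpath a1 a3) w = 0"
      by (intro winding_number_rectpath_outside) auto
  qed
  have fin: "finite pts" by (simp add: pts_def)
  have "contour_integral (rectpath a1 a3) (gg z l) =
        2 * pi * \<i> * (\<Sum>p\<in>pts. winding_number (rectpath a1 a3) p * residue (gg z l) p)"
  proof (rule Residue_theorem[OF _ _ fin holo valid_path_rectpath _ pimg homo])
    show "open S" unfolding S_def by (rule open_box)
    show "connected S" unfolding S_def by (rule convex_connected) (rule convex_box)
    show "pathfinish (rectpath a1 a3) = pathstart (rectpath a1 a3)" by simp
  qed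
  also have "(\<Sum>p\<in>pts. winding_number (rectpath a1 a3) p * residue (gg z l) p) = (\<Sum>p\<in>pts. residue (gg z l) p)"
    by (intro sum.cong refl) (simp add: winding_number_rectpath ptsbox)
  also have "\<dots> = residue (gg z l) z + (\<Sum>m\<in>{1..N}. residue (gg z l) (H m))"
  proof -
    have zH: "z \<notin> H ` {1..N}"
    proof
      assume "z \<in> H ` {1..N}"
      then obtain m where "z = of_nat m - 1/2" by (auto simp: H_def)
      hence "z = of_int (int m) - 1/2" by simp
      thus False using cz cos_pi_zero_iff by blast
    qed
    have inj: "inj_on H {1..N}" by (auto simp: inj_on_def H_def)
    show ?thesis unfolding pts_def using zH inj
      by (simp add: sum.reindex)
  qed
  finally have "contour_integral (rectpath a1 a3) (gg z l) = 2 * pi * \<i> * (residue (gg z l) z + (\<Sum>m\<in>{1..N}. residue (gg z l) (H m)))" .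
  moreover have "continuous_on (path_image (rectpath a1 a3)) (gg z l)"
    using holomorphic_on_imp_continuous_on[OF holo] pimg by (rule continuous_on_subset)
  ultimately show ?thesis unfolding a1_def a3_def H_def by simp
qed

lemma BB_deriv: "(BB z has_field_derivative
   (- (complex_of_real pi * sin (complex_of_real pi * w)) * (z\<^sup>2 - w\<^sup>2) + cos (complex_of_real pi * w) * (- 2 * w))) (at w)"
  unfolding BB_def by (auto intro!: derivative_eq_intros simp: power2_eq_square algebra_simps)

lemma residue_at_z:
  assumes cz: "cos (complex_of_real pi * z) \<noteq> 0" and z0: "z \<noteq> 0"
  shows "residue (gg z l) z = - exp (- (complex_of_real l * z))"
proof -
  have "residue (\<lambda>w. AA z l w / BB z w) z = AA z l z /
     (- (complex_of_real pi * sin (complex_of_real pi * z)) * (z\<^sup>2 - z\<^sup>2) + cos (complex_of_real pi * z) * (- 2 * z))"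
  proof (rule residue_simple_pole_deriv[where s=UNIV])
    show "AA z l holomorphic_on UNIV" unfolding AA_def by (intro holomorphic_intros)
    show "BB z holomorphic_on UNIV" unfolding BB_def by (intro holomorphic_intros)
    show "(BB z has_field_derivative (- (complex_of_real pi * sin (complex_of_real pi * z)) * (z\<^sup>2 - z\<^sup>2) + cos (complex_of_real pi * z) * (- 2 * z))) (at z)"
      by (rule BB_deriv)
  qed (use cz z0 in \<open>auto simp: AA_def BB_def\<close>)
  also have "\<dots> = - exp (- (complex_of_real l * z))"
    using cz z0 by (simp add: AA_def field_simps)
  finally show ?thesis by (simp add: gg_AB)
qed

lemma sin_half_int: "sin (complex_of_real pi * (of_nat m - 1/2)) = - ((-1) ^ m)"
proof -
  have "complex_of_real pi * (of_nat m - 1/2) = complex_of_real (real m * pi - pi/2)"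
    by (simp add: algebra_simps)
  moreover have "sin (real m * pi - pi/2) = - ((-1) ^ m)"
    by (simp add: sin_diff cos_npi)
  ultimately show ?thesis by (simp only: sin_of_real) simp
qed

lemma cos_half_int: "cos (complex_of_real pi * (of_nat m - 1/2)) = 0"
  using cos_pi_zero_iff[of "of_nat m - 1/2"] by (metis of_int_of_nat_eq)

lemma powi_one_minus: "(-1::complex) powi (1 - int m) = - ((-1) ^ m)"
proof -
  have "(-1::complex) powi (1 - int m) = (-1) powi 1 / (-1) powi (int m)"
    by (rule power_int_diff) simp
  also have "\<dots> = - ((-1) ^ m)" by (cases "even m") (auto simp: power_int_of_nat)
  finally show ?thesis .
qed

lemma alg_res:
  fixes C E q sg u v :: complex
  assumes "u \<noteq> 0" "v \<noteq> 0" "q \<noteq> 0" "sg * sg = 1"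
  shows "C * (v - u) * E / (q * sg * (u * v)) = C / u / q * sg * E + C / v / q * (- sg) * E"
proof -
  have s0: "sg \<noteq> 0" using assms(4) by auto
  have "C * (v - u) * E / (q * sg * (u * v)) = (C * (v - u) * E * sg) * sg / (sg * (q * (u * v)))"
  proof -
    have 1: "(C * (v - u) * E * sg) * sg = C * (v - u) * E" using assms(4) by (simp add: mult.assoc)
    have 2: "sg * (q * (u * v)) = q * sg * (u * v)" by (simp add: ac_simps)
    show ?thesis unfolding 1 2 ..
  qed
  also have "\<dots> = C * (v - u) * E * sg / (q * (u * v))"
    using s0 by simp
  also have "\<dots> = C / u / q * sg * E + C / v / q * (- sg) * E"
    using assms by (simp add: field_simps)
  finally show ?thesis .
qed

lemma residue_at_half:
  assumes cz: "cos (complex_of_real pi * z) \<noteq> 0" and z0: "Re z > 0" and m: "m \<ge> 1"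
  shows "residue (gg z l) (of_nat m - 1/2) = K_term l z (int m) + K_term l z (1 - int m)"
proof -
  define a :: complex where "a = of_nat m - 1/2"
  define E :: complex where "E = complex_of_real (exp (- l * (real m - 1/2)))"
  have za: "z \<noteq> a" using cz cos_half_int[of m] by (auto simp: a_def)
  have za': "z \<noteq> - a"
  proof
    assume "z = - a"
    hence "Re z = 1/2 - real m" by (simp add: a_def)
    thus False using z0 m by simp
  qed
  have a0: "a \<noteq> 0"
  proof
    assume "a = 0" hence "Re a = 0" by simp
    thus False using m by (simp add: a_def)
  qed
  have sa: "sin (complex_of_real pi * a) = - ((-1) ^ m)" unfolding a_def by (rule sin_half_int)
  have ca: "cos (complex_of_real pi * a) = 0" unfolding a_def by (rule cos_half_int)
  have za2: "z\<^sup>2 - a\<^sup>2 \<noteq> 0"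
  proof
    assume "z\<^sup>2 - a\<^sup>2 = 0"
    hence "(z - a) * (z + a) = 0" by (simp add: power2_eq_square algebra_simps)
    thus False using za za' by (auto simp: add_eq_0_iff2)
  qed
  have eE: "exp (- (complex_of_real l * a)) = E"
  proof -
    have "- (complex_of_real l * a) = complex_of_real (- l * (real m - 1/2))" by (simp add: a_def algebra_simps)
    thus ?thesis unfolding E_def by (simp only: exp_of_real)
  qed
  have "residue (\<lambda>w. AA z l w / BB z w) a = AA z l a /
     (- (complex_of_real pi * sin (complex_of_real pi * a)) * (z\<^sup>2 - a\<^sup>2) + cos (complex_of_real pi * a) * (- 2 * a))"
  proof (rule residue_simple_pole_deriv[where s=UNIV])
    show "AA z l holomorphic_on UNIV" unfolding AA_def by (intro holomorphic_intros)
    show "BB z holomorphic_on UNIV" unfolding BB_def by (intro holomorphic_intros)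
    show "(BB z has_field_derivative (- (complex_of_real pi * sin (complex_of_real pi * a)) * (z\<^sup>2 - a\<^sup>2) + cos (complex_of_real pi * a) * (- 2 * a))) (at a)"
      by (rule BB_deriv)
  qed (use cz a0 za2 sa ca in \<open>auto simp: AA_def BB_def\<close>)
  hence res: "residue (gg z l) a = cos (complex_of_real pi * z) * (2 * a) * E /
     (complex_of_real pi * ((-1) ^ m) * (z\<^sup>2 - a\<^sup>2))"
    by (simp add: gg_AB AA_def sa ca eE)
  have k1: "K_term l z (int m) = cos (complex_of_real pi * z) / (z - a) / complex_of_real pi * ((-1) ^ m) * E"
  proof -
    have "complex_of_int (int m) - 1/2 = a" by (simp add: a_def)
    moreover have "\<bar>real_of_int (int m) - 1/2\<bar> = real m - 1/2" using m by simp
    ultimately show ?thesis using za unfolding K_term_def Let_def E_def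
      by (simp add: power_int_of_nat)
  qed
  have k2: "K_term l z (1 - int m) = cos (complex_of_real pi * z) / (z + a) / complex_of_real pi * (- ((-1) ^ m)) * E"
  proof -
    have "complex_of_int (1 - int m) - 1/2 = - a" by (simp add: a_def)
    moreover have "\<bar>real_of_int (1 - int m) - 1/2\<bar> = real m - 1/2" using m by simp
    ultimately show ?thesis using za' unfolding K_term_def Let_def E_def
      by (simp add: powi_one_minus)
  qed
  have fac: "z\<^sup>2 - a\<^sup>2 = (z - a) * (z + a)" by (simp add: power2_eq_square algebra_simps)
  have zam: "z - a \<noteq> 0" "z + a \<noteq> 0" using za za' by (auto simp: add_eq_0_iff2)
  have "residue (gg z l) a = K_term l z (int m) + K_term l z (1 - int m)"
  proof -
    have "2 * a = (z + a) - (z - a)" by simp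
    moreover have "((-1::complex)^m) * ((-1)^m) = 1" by (simp flip: power_add)
    ultimately show ?thesis unfolding res k1 k2 fac using zam alg_res[of "z - a" "z + a" "complex_of_real pi" "(-1)^m"]
      by (simp add: mult.assoc)
  qed
  thus ?thesis by (simp add: a_def)
qed

lemma sym_sum: "(\<Sum>n\<in>{1 - int N..int N}. f n) = (\<Sum>m\<in>{1..N}. f (int m) + f (1 - int m))"
proof (induction N)
  case 0 thus ?case by simp
next
  case (Suc N)
  have e: "{1 - int (Suc N)..int (Suc N)} = insert (- int N) (insert (int N + 1) {1 - int N..int N})"
    by auto
  have "(\<Sum>n\<in>{1 - int (Suc N)..int (Suc N)}. f n) = f (- int N) + (f (int N + 1) + (\<Sum>n\<in>{1 - int N..int N}. f n))"
    unfolding e by (subst sum.insert; simp)+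
  also have "\<dots> = (\<Sum>m\<in>{1..Suc N}. f (int m) + f (1 - int m))"
    using Suc by (simp add: add_ac)
  finally show ?case .
qed

lemma rect_edges:
  assumes x: "x1 < x2" and y: "y1 < y2"
    and cont: "continuous_on (path_image (rectpath (Complex x1 y1) (Complex x2 y2))) f"
  shows "f contour_integrable_on linepath (Complex x1 y1) (Complex x2 y1) \<and>
     f contour_integrable_on linepath (Complex x2 y2) (Complex x1 y2) \<and>
     contour_integral (rectpath (Complex x1 y1) (Complex x2 y2)) f =
     contour_integral (linepath (Complex x1 y1) (Complex x2 y1)) f
     + \<i> * integral {y1..y2} (\<lambda>t. f (Complex x2 t))
     + contour_integral (linepath (Complex x2 y2) (Complex x1 y2)) f
     - \<i> * integral {y1..y2} (\<lambda>t. f (Complex x1 t))"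
proof -
  define a1 where "a1 = Complex x1 y1"
  define a2 where "a2 = Complex x2 y1"
  define a3 where "a3 = Complex x2 y2"
  define a4 where "a4 = Complex x1 y2"
  have pi: "path_image (rectpath a1 a3) = closed_segment a1 a2 \<union> closed_segment a2 a3 \<union> closed_segment a3 a4 \<union> closed_segment a4 a1"
    by (simp add: rectpath_def Let_def path_image_join Un_assoc a1_def a2_def a3_def a4_def)
  have c: "continuous_on (closed_segment a1 a2) f" "continuous_on (closed_segment a2 a3) f"
          "continuous_on (closed_segment a3 a4) f" "continuous_on (closed_segment a4 a1) f"
    using cont unfolding a1_def[symmetric] a3_def[symmetric] pi
    by (auto intro: continuous_on_subset)
  have i: "f contour_integrable_on linepath a1 a2" "f contour_integrable_on linepath a2 a3"
          "f contour_integrable_on linepath a3 a4" "f contour_integrable_on linepath a4 a1"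
    using c by (auto intro: contour_integrable_continuous_linepath)
  have "contour_integral (rectpath a1 a3) f =
       contour_integral (linepath a1 a2) f + contour_integral (linepath a2 a3) f
       + contour_integral (linepath a3 a4) f + contour_integral (linepath a4 a1) f"
    unfolding rectpath_def Let_def using i
    by (simp add: a1_def a2_def a3_def a4_def add_ac)
  also have "contour_integral (linepath a2 a3) f = \<i> * integral {y1..y2} (\<lambda>t. f (Complex x2 t))"
    by (rule contour_integral_linepath_same_Re) (use y in \<open>auto simp: a2_def a3_def\<close>)
  also have "contour_integral (linepath a4 a1) f = - contour_integral (linepath a1 a4) f"
    by (rule contour_integral_reverse_linepath) (use c in \<open>simp add: closed_segment_commute\<close>)
  also have "contour_integral (linepath a1 a4) f = \<i> * integral {y1..y2} (\<lambda>t. f (Complex x1 t))"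
    by (rule contour_integral_linepath_same_Re) (use y in \<open>auto simp: a1_def a4_def\<close>)
  finally show ?thesis using i by (simp add: a1_def a2_def a3_def a4_def)
qed

lemma integral_sym_tendsto:
  fixes h :: "real \<Rightarrow> complex"
  assumes h: "integrable lborel h"
  shows "((\<lambda>T. integral {-T..T} h) \<longlongrightarrow> (LINT t|lborel. h t)) at_top"
proof -
  have eq: "integral {-T..T} h = (LINT x|lborel. indicator {-T..T} x *\<^sub>R h x)" for T
  proof -
    have si: "set_integrable lborel {-T..T} h"
      unfolding set_integrable_def by (rule integrable_mult_indicator) (use h in auto)
    show ?thesis using set_borel_integral_eq_integral(2)[OF si]
      by (simp add: set_lebesgue_integral_def)
  qed
  have "((\<lambda>T. LINT x|lborel. indicator {-T..T} x *\<^sub>R h x) \<longlongrightarrow> (LINT t|lborel. h t)) at_top"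
  proof (rule integral_dominated_convergence_at_top[where w="\<lambda>x. norm (h x)"])
    show "h \<in> borel_measurable lborel" using h by auto
    show "(\<lambda>x. indicator {-T..T} x *\<^sub>R h x) \<in> borel_measurable lborel" for T
      using h by auto
    show "integrable lborel (\<lambda>x. norm (h x))" using h by auto
    show "AE x in lborel. ((\<lambda>T. indicator {-T..T} x *\<^sub>R h x) \<longlongrightarrow> h x) at_top"
    proof (rule AE_I2)
      fix x
      have "eventually (\<lambda>T. indicator {-T..T} x *\<^sub>R h x = h x) at_top"
        using eventually_ge_at_top[of "\<bar>x\<bar>"] by eventually_elim (auto simp: indicator_def)
      thus "((\<lambda>T. indicator {-T..T} x *\<^sub>R h x) \<longlongrightarrow> h x) at_top"
        by (rule tendsto_eventually)
    qed
    show "\<forall>\<^sub>F T in at_top. AE x in lborel. norm (indicator {-T..T} x *\<^sub>R h x) \<le> norm (h x)"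
      by (intro always_eventually allI AE_I2) (auto simp: indicator_def)
  qed
  thus ?thesis unfolding eq .
qed

lemma hedge_bound:
  assumes l: "0 \<le> l" and x: "0 \<le> xlo" and T: "T > \<bar>Im z\<bar>" "\<bar>y\<bar> = T"
    and ab: "Im a = y" "Im b = y" "Re a \<in> {xlo..xhi}" "Re b \<in> {xlo..xhi}"
    and int: "gg z l contour_integrable_on linepath a b"
  shows "norm (contour_integral (linepath a b) (gg z l)) \<le>
     (norm (cos (complex_of_real pi * z)) * (2/(exp (pi*T) - exp (-pi*T))) * (2*(xhi+T)/(T - \<bar>Im z\<bar>)\<^sup>2))
      * norm (b - a)"
proof (rule contour_integral_bound_linepath[OF int])
  have T0: "T > 0" using T by linarith
  show "0 \<le> norm (cos (complex_of_real pi * z)) * (2/(exp (pi*T) - exp (-pi*T))) * (2*(xhi+T)/(T - \<bar>Im z\<bar>)\<^sup>2)"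
    using T0 x ab by (intro mult_nonneg_nonneg divide_nonneg_nonneg) auto
  fix w assume w: "w \<in> closed_segment a b"
  hence "Im w = y" "Re w \<in> closed_segment (Re a) (Re b)"
    using ab by (auto simp: closed_segment_same_Im)
  hence "Im w = y" "xlo \<le> Re w" "Re w \<le> xhi"
    using ab by (auto simp: closed_segment_eq_real_ivl split: if_splits)
  thus "norm (gg z l w) \<le> norm (cos (complex_of_real pi * z)) * (2/(exp (pi*T) - exp (-pi*T))) * (2*(xhi+T)/(T - \<bar>Im z\<bar>)\<^sup>2)"
    using T x l by (intro hline_bound) auto
qed

lemma hedge_lim: "((\<lambda>T. (C * (2/(exp (pi*T) - exp (-pi*T))) * (2*(R+T)/(T - Y)\<^sup>2)) * D) \<longlongrightarrow> 0) at_top"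
  by real_asymp

lemma line_identity:
  fixes N :: nat
  assumes l: "0 < l" and b: "0 < \<beta>" "\<beta> < 1/2" "\<beta> < Re z"
    and cz: "cos (complex_of_real pi * z) \<noteq> 0" and zN: "Re z < real N"
  shows "(LINT t|lborel. gg z l (Complex \<beta> t)) = (LINT t|lborel. gg z l (Complex (real N) t))
     + 2*pi*(exp (- (complex_of_real l * z)) - (\<Sum>n\<in>{1 - int N..int N}. K_term l z n))"
proof -
  define E where "E = exp (- (complex_of_real l * z))"
  define KN where "KN = (\<Sum>n\<in>{1 - int N..int N}. K_term l z n)"
  define Ib where "Ib = (\<lambda>T. integral {-T..T} (\<lambda>t. gg z l (Complex \<beta> t)))"
  define IN where "IN = (\<lambda>T. integral {-T..T} (\<lambda>t. gg z l (Complex (real N) t)))"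
  define H1 where "H1 = (\<lambda>T. contour_integral (linepath (Complex \<beta> (-T)) (Complex (real N) (-T))) (gg z l))"
  define H3 where "H3 = (\<lambda>T. contour_integral (linepath (Complex (real N) T) (Complex \<beta> T)) (gg z l))"
  define Bd where "Bd = (\<lambda>T. (norm (cos (complex_of_real pi * z)) * (2/(exp (pi*T) - exp (-pi*T))) *
      (2*(real N+T)/(T - \<bar>Im z\<bar>)\<^sup>2)) * (real N - \<beta>))"
  have z0: "z \<noteq> 0" using b by auto
  have Rz: "Re z > 0" using b by linarith
  have bN: "\<beta> < real N" using b zN by linarith
  have cb: "cos (pi * \<beta>) \<noteq> 0"
  proof -
    have "cos (pi * \<beta>) > 0" using b by (intro cos_gt_zero) (auto simp: field_simps)
    thus ?thesis by simp
  qed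
  have cN: "cos (pi * real N) \<noteq> 0" by (simp add: mult.commute[of pi] cos_npi)
  have intb: "integrable lborel (\<lambda>t. gg z l (Complex \<beta> t))"
    using cb b by (intro gg_line_integrable) auto
  have intN: "integrable lborel (\<lambda>t. gg z l (Complex (real N) t))"
    using cN b zN by (intro gg_line_integrable) auto
  have key: "Ib T = IN T - \<i> * (H1 T + H3 T) + 2*pi*(E - KN) \<and> norm (H1 T) \<le> Bd T \<and> norm (H3 T) \<le> Bd T"
    if T: "T > \<bar>Im z\<bar>" for T
  proof -
    have T0: "-T < T" using T by linarith
    note rr = rect_residue[OF b cz zN T, of l]
    note re = rect_edges[OF bN T0 conjunct1[OF rr]]
    have res: "residue (gg z l) z + (\<Sum>m\<in>{1..N}. residue (gg z l) (of_nat m - 1/2)) = - E + KN"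
    proof -
      have "(\<Sum>m\<in>{1..N}. residue (gg z l) (of_nat m - 1/2)) = (\<Sum>m\<in>{1..N}. K_term l z (int m) + K_term l z (1 - int m))"
        by (intro sum.cong refl residue_at_half[OF cz Rz]) auto
      also have "\<dots> = KN" unfolding KN_def by (rule sym_sum[symmetric])
      finally show ?thesis using residue_at_z[OF cz z0, of l] by (simp add: E_def)
    qed
    have main: "H1 T + \<i> * IN T + H3 T - \<i> * Ib T = 2*pi*\<i> * (- E + KN)"
      using conjunct2[OF rr] conjunct2[OF conjunct2[OF re]] res
      by (simp add: H1_def H3_def IN_def Ib_def)
    have "Ib T = - \<i> * (\<i> * Ib T)" by simp
    also have "\<i> * Ib T = H1 T + \<i> * IN T + H3 T - 2*pi*\<i> * (- E + KN)" using main by (simp add: algebra_simps)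
    finally have e1: "Ib T = IN T - \<i> * (H1 T + H3 T) + 2*pi*(E - KN)" by (simp add: algebra_simps)
    have b1: "norm (H1 T) \<le> Bd T"
    proof -
      have "norm (H1 T) \<le> (norm (cos (complex_of_real pi * z)) * (2/(exp (pi*T) - exp (-pi*T))) *
          (2*(real N+T)/(T - \<bar>Im z\<bar>)\<^sup>2)) * norm (Complex (real N) (-T) - Complex \<beta> (-T))"
        unfolding H1_def using l b bN T conjunct1[OF re]
        by (intro hedge_bound[where y="-T" and xlo=\<beta>]) auto
      also have "norm (Complex (real N) (-T) - Complex \<beta> (-T)) = real N - \<beta>"
        using bN by (simp add: cmod_def)
      finally show ?thesis unfolding Bd_def .
    qed
    have b3: "norm (H3 T) \<le> Bd T"
    proof -
      have "norm (H3 T) \<le> (norm (cos (complex_of_real pi * z)) * (2/(exp (pi*T) - exp (-pi*T))) *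
          (2*(real N+T)/(T - \<bar>Im z\<bar>)\<^sup>2)) * norm (Complex \<beta> T - Complex (real N) T)"
        unfolding H3_def using l b bN T conjunct1[OF conjunct2[OF re]]
        by (intro hedge_bound[where y="T" and xlo=\<beta>]) auto
      also have "norm (Complex \<beta> T - Complex (real N) T) = real N - \<beta>"
        using bN by (simp add: cmod_def)
      finally show ?thesis unfolding Bd_def .
    qed
    show ?thesis using e1 b1 b3 by blast
  qed
  have ev: "eventually (\<lambda>T. T > \<bar>Im z\<bar>) at_top" by (rule eventually_gt_at_top)
  have lb: "(Ib \<longlongrightarrow> (LINT t|lborel. gg z l (Complex \<beta> t))) at_top"
    unfolding Ib_def by (rule integral_sym_tendsto[OF intb])
  have lN: "(IN \<longlongrightarrow> (LINT t|lborel. gg z l (Complex (real N) t))) at_top"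
    unfolding IN_def by (rule integral_sym_tendsto[OF intN])
  have lB: "(Bd \<longlongrightarrow> 0) at_top" unfolding Bd_def by (rule hedge_lim)
  have l1: "(H1 \<longlongrightarrow> 0) at_top"
    by (rule Lim_null_comparison[OF _ lB]) (use ev in \<open>eventually_elim, use key in blast\<close>)
  have l3: "(H3 \<longlongrightarrow> 0) at_top"
    by (rule Lim_null_comparison[OF _ lB]) (use ev in \<open>eventually_elim, use key in blast\<close>)
  have lr: "((\<lambda>T. IN T - \<i> * (H1 T + H3 T) + 2*pi*(E - KN)) \<longlongrightarrow>
      (LINT t|lborel. gg z l (Complex (real N) t)) - \<i> * (0 + 0) + 2*pi*(E - KN)) at_top"
    by (intro tendsto_intros lN l1 l3)
  have lb': "((\<lambda>T. IN T - \<i> * (H1 T + H3 T) + 2*pi*(E - KN)) \<longlongrightarrow> (LINT t|lborel. gg z l (Complex \<beta> t))) at_top"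
    by (rule Lim_transform_eventually[OF lb]) (use ev in \<open>eventually_elim, use key in simp\<close>)
  have "(LINT t|lborel. gg z l (Complex \<beta> t)) = (LINT t|lborel. gg z l (Complex (real N) t)) - \<i> * (0 + 0) + 2*pi*(E - KN)"
    using tendsto_unique[OF _ lb' lr] by simp
  thus ?thesis by (simp add: E_def KN_def)
qed

lemma geom_summable_on:
  fixes q C :: real assumes "0 \<le> q" "q < 1"
  shows "(\<lambda>m::nat. C * q ^ m) summable_on UNIV"
proof -
  have "summable (\<lambda>m. norm (C * q ^ m))"
    using assms by (simp add: abs_mult power_abs summable_mult summable_geometric)
  thus ?thesis by (rule norm_summable_imp_summable_on)
qed

lemma exp_half_summable:
  fixes l :: real assumes l: "0 < l"
  shows "(\<lambda>n::int. exp (- l * \<bar>real_of_int n - 1/2\<bar>)) summable_on UNIV"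
proof -
  define g where "g = (\<lambda>n::int. exp (- l * \<bar>real_of_int n - 1/2\<bar>))"
  have q: "0 \<le> exp (-l)" "exp (-l) < 1" using l by auto
  have pw: "exp (-l) ^ m = exp (- l * real m)" for m by (simp add: exp_of_nat_mult[symmetric] algebra_simps)
  have s1: "g summable_on (int ` UNIV)"
  proof -
    have "(g \<circ> int) summable_on UNIV"
    proof (rule summable_on_comparison_test[OF geom_summable_on[OF q, of "exp (l/2)"]])
      fix m :: nat
      have "\<bar>real m - 1/2\<bar> \<ge> real m - 1/2" by simp
      hence "exp (- l * \<bar>real m - 1/2\<bar>) \<le> exp (- l * (real m - 1/2))"
        using l by (intro exp_mono) (simp add: mult_le_cancel_left)
      also have "\<dots> = exp (l/2) * exp (-l) ^ m" by (simp add: pw flip: exp_add) (simp add: algebra_simps)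
      finally show "(g \<circ> int) m \<le> exp (l/2) * exp (-l) ^ m" by (simp add: g_def)
      show "0 \<le> (g \<circ> int) m" by (simp add: g_def)
    qed
    thus ?thesis by (subst summable_on_reindex) auto
  qed
  have s2: "g summable_on ((\<lambda>m::nat. - int m) ` UNIV)"
  proof -
    have "(g \<circ> (\<lambda>m::nat. - int m)) summable_on UNIV"
    proof (rule summable_on_comparison_test[OF geom_summable_on[OF q, of 1]])
      fix m :: nat
      have "exp (- l * \<bar>- real m - 1/2\<bar>) \<le> exp (- l * real m)"
        using l by (intro exp_mono) (simp add: mult_le_cancel_left)
      thus "(g \<circ> (\<lambda>m::nat. - int m)) m \<le> 1 * exp (-l) ^ m" by (simp add: g_def pw)
      show "0 \<le> (g \<circ> (\<lambda>m::nat. - int m)) m" by (simp add: g_def)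
    qed
    thus ?thesis by (subst summable_on_reindex) (auto simp: inj_on_def)
  qed
  have "UNIV = int ` UNIV \<union> (\<lambda>m::nat. - int m) ` UNIV"
  proof -
    have "n \<in> int ` UNIV \<union> (\<lambda>m::nat. - int m) ` UNIV" for n :: int
    proof (cases "n \<ge> 0")
      case True then have "n = int (nat n)" by simp thus ?thesis by blast
    next
      case False then have "n = - int (nat (-n))" by simp thus ?thesis by blast
    qed
    thus ?thesis by blast
  qed
  thus ?thesis using summable_on_union[OF s1 s2] unfolding g_def by simp
qed

lemma K_summable:
  assumes l: "0 < l" and cz: "cos (complex_of_real pi * z) \<noteq> 0"
  shows "K_term l z summable_on UNIV"
proof -
  define k :: int where "k = \<lceil>norm z\<rceil> + 2"
  define F where "F = {-k..k}"
  define C where "C = norm (cos (complex_of_real pi * z)) / pi"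
  have bnd: "norm (K_term l z n) \<le> C * exp (- l * \<bar>real_of_int n - 1/2\<bar>)" if n: "n \<in> UNIV - F" for n
  proof -
    define a :: complex where "a = of_int n - 1/2"
    have za: "z \<noteq> a" using cz cos_pi_zero_iff unfolding a_def by blast
    have nk: "\<bar>n\<bar> > k" using n by (auto simp: F_def)
    have "norm a \<ge> \<bar>Re a\<bar>" by (rule abs_Re_le_cmod)
    moreover have "\<bar>Re a\<bar> = \<bar>real_of_int n - 1/2\<bar>" by (simp add: a_def)
    moreover have "\<bar>real_of_int n - 1/2\<bar> \<ge> real_of_int \<bar>n\<bar> - 1/2" by linarith
    moreover have "real_of_int \<bar>n\<bar> \<ge> norm z + 3"
    proof -
      have "real_of_int \<bar>n\<bar> \<ge> real_of_int (k + 1)" using nk by linarith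
      thus ?thesis unfolding k_def by linarith
    qed
    ultimately have "norm a \<ge> norm z + 2" by linarith
    hence d1: "norm (z - a) \<ge> 1" using norm_triangle_ineq2[of a z] by (simp add: norm_minus_commute)
    have "norm (K_term l z n) = norm (cos (complex_of_real pi * z)) / norm (z - a) / pi * exp (- l * \<bar>real_of_int n - 1/2\<bar>)"
      using za unfolding K_term_def Let_def a_def[symmetric]
      by (simp add: norm_mult norm_divide norm_power_int)
    also have "\<dots> \<le> norm (cos (complex_of_real pi * z)) / 1 / pi * exp (- l * \<bar>real_of_int n - 1/2\<bar>)"
      using d1 by (intro mult_right_mono divide_right_mono divide_left_mono) auto
    finally show ?thesis by (simp add: C_def)
  qed
  have sF: "(\<lambda>n. norm (K_term l z n)) summable_on F" by (simp add: F_def)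
  have sG: "(\<lambda>n. norm (K_term l z n)) summable_on (UNIV - F)"
  proof (rule summable_on_comparison_test)
    show "(\<lambda>n. C * exp (- l * \<bar>real_of_int n - 1/2\<bar>)) summable_on (UNIV - F)"
      by (rule summable_on_subset[OF summable_on_cmult_right[OF exp_half_summable[OF l]]]) auto
  qed (use bnd in auto)
  have "(\<lambda>n. norm (K_term l z n)) summable_on (F \<union> (UNIV - F))"
    by (rule summable_on_union[OF sF sG])
  hence "(\<lambda>n. norm (K_term l z n)) summable_on UNIV" by simp
  thus ?thesis by (simp add: summable_on_iff_abs_summable_on_complex)
qed

lemma K_partial_tendsto:
  assumes "K_term l z summable_on UNIV"
  shows "(\<lambda>N::nat. \<Sum>n\<in>{1 - int N..int N}. K_term l z n) \<longlonglongrightarrow> K_ker l z"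
proof -
  have hs: "(sum (K_term l z) \<longlongrightarrow> K_ker l z) (finite_subsets_at_top UNIV)"
    using has_sum_infsum[OF assms] unfolding has_sum_def K_ker_def .
  have fl: "filterlim (\<lambda>N::nat. {1 - int N..int N}) (finite_subsets_at_top UNIV) sequentially"
    unfolding filterlim_finite_subsets_at_top
  proof (intro allI impI)
    fix X :: "int set" assume X: "finite X \<and> X \<subseteq> UNIV"
    define M where "M = Max (insert 0 (abs ` X))"
    have M: "\<bar>x\<bar> \<le> M" if "x \<in> X" for x
      unfolding M_def using X that by (intro Max_ge) auto
    show "\<forall>\<^sub>F N in sequentially. finite {1 - int N..int N} \<and> X \<subseteq> {1 - int N..int N} \<and> {1 - int N..int N} \<subseteq> UNIV"
      using eventually_ge_at_top[of "nat M + 1"]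
    proof eventually_elim
      case (elim N)
      have "X \<subseteq> {1 - int N..int N}"
      proof
        fix x assume "x \<in> X"
        hence "\<bar>x\<bar> \<le> M" by (rule M)
        thus "x \<in> {1 - int N..int N}" using elim by auto
      qed
      thus ?case by simp
    qed
  qed
  show ?thesis using filterlim_compose[OF hs fl] by simp
qed

lemma seq_lim_aux: "((\<lambda>N::nat. C * (2/(real N - a) + b/(real N - a))) \<longlongrightarrow> 0) sequentially"
  by real_asymp

lemma JN_tendsto:
  assumes l: "0 < l" and z: "0 < Re z"
  shows "(\<lambda>N::nat. LINT t|lborel. gg z l (Complex (real N) t)) \<longlonglongrightarrow> 0"
proof -
  define I where "I = (LINT t|lborel. exp (- pi * \<bar>t\<bar>))"
  define Cz where "Cz = norm (cos (complex_of_real pi * z))"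
  define g where "g = (\<lambda>N::nat. (Cz * 2 * I) * (2/(real N - Re z) + (2 * norm z / Re z)/(real N - Re z)))"
  have intE: "integrable lborel (\<lambda>t::real. exp (- pi * \<bar>t\<bar>))" by (rule integrable_exp_abs) simp
  have I0: "I \<ge> 0" unfolding I_def by (intro integral_nonneg_AE) auto
  have bnd: "norm (LINT t|lborel. gg z l (Complex (real N) t)) \<le> g N" if N: "real N > Re z" for N
  proof -
    define c where "c = real N"
    have c0: "0 < c" using N z by (simp add: c_def)
    have cc: "\<bar>cos (pi * c)\<bar> = 1" by (simp add: c_def mult.commute[of pi] cos_npi)
    hence cN: "cos (pi * c) \<noteq> 0" by auto
    have zc: "Re z \<noteq> c" using N by (simp add: c_def)
    define M where "M = 2/\<bar>Re z - c\<bar> + 2*norm z/(\<bar>Re z - c\<bar>*(Re z + c))"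
    have M: "M \<le> 2/(c - Re z) + (2 * norm z / Re z)/(c - Re z)"
    proof -
      have a: "\<bar>Re z - c\<bar> = c - Re z" using N by (simp add: c_def)
      have "2*norm z/((c - Re z)*(Re z + c)) \<le> (2 * norm z / Re z)/(c - Re z)"
      proof -
        have "2*norm z/((c - Re z)*(Re z + c)) = (2*norm z/(Re z + c))/(c - Re z)" by simp
        also have "\<dots> \<le> (2 * norm z / Re z)/(c - Re z)"
          using N z c0 by (intro divide_right_mono divide_left_mono) (auto simp: c_def)
        finally show ?thesis .
      qed
      thus ?thesis unfolding M_def a by simp
    qed
    have M0: "M \<ge> 0" unfolding M_def using z c0 by (intro add_nonneg_nonneg divide_nonneg_nonneg) auto
    have "norm (LINT t|lborel. gg z l (Complex c t)) \<le>
        (LINT t|lborel. Cz * (2/\<bar>cos (pi*c)\<bar>) * M * exp (-l*c) * exp (-pi*\<bar>t\<bar>))"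
    proof (rule Bochner_Integration.integral_norm_bound_integral)
      show "integrable lborel (\<lambda>t. gg z l (Complex c t))"
        using c0 cN z zc by (rule gg_line_integrable)
      show "integrable lborel (\<lambda>t. Cz * (2/\<bar>cos (pi*c)\<bar>) * M * exp (-l*c) * exp (-pi*\<bar>t\<bar>))"
        using intE by simp
      show "norm (gg z l (Complex c t)) \<le> Cz * (2/\<bar>cos (pi*c)\<bar>) * M * exp (-l*c) * exp (-pi*\<bar>t\<bar>)" for t
        unfolding Cz_def M_def by (rule vline_bound[OF c0 cN z zc])
    qed
    also have "\<dots> = Cz * 2 * M * exp (-l*c) * I"
      unfolding I_def cc by simp
    also have "\<dots> = (Cz * 2) * (M * exp (-l*c)) * I" by (simp add: mult_ac)
    also have "\<dots> \<le> (Cz * 2) * (2/(c - Re z) + (2 * norm z / Re z)/(c - Re z)) * I"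
    proof -
      have "M * exp (-l*c) \<le> M" using M0 l c0 by (intro mult_left_le) auto
      hence "M * exp (-l*c) \<le> 2/(c - Re z) + (2 * norm z / Re z)/(c - Re z)" using M by linarith
      thus ?thesis using I0 by (intro mult_right_mono mult_left_mono) (auto simp: Cz_def)
    qed
    finally show ?thesis by (simp add: g_def c_def mult_ac)
  qed
  have ev: "eventually (\<lambda>N::nat. real N > Re z) sequentially"
    using real_arch_simple[of "Re z + 1"] by (auto intro!: eventually_sequentiallyI[where c="nat \<lceil>Re z\<rceil> + 1"]) linarith
  have "g \<longlonglongrightarrow> 0" unfolding g_def by (rule seq_lim_aux)
  thus ?thesis
    by (rule Lim_null_comparison[rotated]) (use ev in \<open>eventually_elim, use bnd in blast\<close>)
qed

lemma pointwise:
  assumes l: "0 < l" and b: "0 < \<beta>" "\<beta> < 1/2" "\<beta> < Re z"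
    and cz: "cos (complex_of_real pi * z) \<noteq> 0"
  shows "(LINT t|lborel. gg z l (Complex \<beta> t)) = 2*pi*(exp (- (complex_of_real l * z)) - K_ker l z)"
proof -
  define F where "F = (\<lambda>N::nat. (LINT t|lborel. gg z l (Complex (real N) t))
     + 2*pi*(exp (- (complex_of_real l * z)) - (\<Sum>n\<in>{1 - int N..int N}. K_term l z n)))"
  have Rz: "0 < Re z" using b by linarith
  have lim: "F \<longlonglongrightarrow> 0 + 2*pi*(exp (- (complex_of_real l * z)) - K_ker l z)"
    unfolding F_def
    by (intro tendsto_intros JN_tendsto[OF l Rz] K_partial_tendsto K_summable[OF l cz])
  have ev: "eventually (\<lambda>N::nat. real N > Re z) sequentially"
    using real_arch_simple[of "Re z + 1"] by (auto intro!: eventually_sequentiallyI[where c="nat \<lceil>Re z\<rceil> + 1"]) linarith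
  have lim2: "F \<longlonglongrightarrow> (LINT t|lborel. gg z l (Complex \<beta> t))"
    by (rule Lim_transform_eventually[OF tendsto_const])
       (use ev in \<open>eventually_elim, simp add: F_def line_identity[OF l b cz]\<close>)
  show ?thesis using tendsto_unique[OF _ lim2 lim] by simp
qed

lemma K_ker_degenerate:
  assumes cz: "cos (complex_of_real pi * z) = 0" and z: "0 < Re z"
  shows "K_ker l z = exp (- (complex_of_real l * z))"
proof -
  obtain m :: int where m: "z = of_int m - 1/2" using cz cos_pi_zero_iff by blast
  have "real_of_int m - 1/2 > 0" using z m by simp
  hence m1: "m \<ge> 1" by linarith
  define k where "k = nat m"
  have mk: "m = int k" using m1 by (simp add: k_def)
  have zk: "z = of_nat k - 1/2" using m mk by simp
  define v where "v = exp (- (complex_of_real l * z))"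
  have t: "K_term l z n = (if n = m then v else 0)" for n
  proof (cases "n = m")
    case True
    have s: "sin (complex_of_real pi * (of_int m - 1/2)) = - ((-1) ^ k)"
      using sin_half_int[of k] mk by simp
    have e: "exp (- (complex_of_real l * z)) = complex_of_real (exp (- l * \<bar>real_of_int m - 1/2\<bar>))"
    proof -
      have "\<bar>real_of_int m - 1/2\<bar> = real k - 1/2" using mk m1 by simp
      moreover have "- (complex_of_real l * z) = complex_of_real (- l * (real k - 1/2))" using zk by simp
      ultimately show ?thesis by (simp only: exp_of_real)
    qed
    have pk: "((-1::complex) ^ k) * ((-1) ^ k) = 1" by (simp flip: power_add)
    have aeq: "complex_of_int n - 1/2 = z" using True m by simp
    have "K_term l z n = (- complex_of_real pi * sin (complex_of_real pi * z)) / complex_of_real pi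
        * ((-1) powi n) * complex_of_real (exp (- l * \<bar>real_of_int n - 1/2\<bar>))"
      unfolding K_term_def Let_def aeq by simp
    also have "sin (complex_of_real pi * z) = - ((-1) ^ k)" using s m by simp
    also have "(-1::complex) powi n = (-1) ^ k" using True mk by (simp add: power_int_of_nat)
    also have "complex_of_real (exp (- l * \<bar>real_of_int n - 1/2\<bar>)) = v" using True e by (simp add: v_def)
    also have "(- complex_of_real pi * - ((-1) ^ k)) / complex_of_real pi * ((-1) ^ k) * v = ((-1) ^ k * (-1) ^ k) * v"
      by simp
    finally show ?thesis using True pk by simp
  next
    case False
    hence "z \<noteq> of_int n - 1/2" using m by simp
    thus ?thesis using False unfolding K_term_def Let_def by (simp add: cz)
  qed
  have "K_ker l z = infsum (\<lambda>n. if n = m then v else 0) UNIV"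
    unfolding K_ker_def t ..
  also have "\<dots> = infsum (\<lambda>n. if n = m then v else 0) {m}"
    by (intro infsum_cong_neutral) auto
  also have "\<dots> = v" by simp
  finally show ?thesis by (simp add: v_def)
qed

theorem lemma4p4:
  fixes \<nu> :: "real measure" and \<beta> :: real and z :: complex
  assumes "finite_measure \<nu>"
    and "sets \<nu> = sets (restrict_space borel {0<..})"
    and "0 < \<beta>" and "\<beta> < 1/2"
    and "Re z > \<beta>"
  shows "integrable lborel (\<lambda>t::real. contour_integrand \<nu> z (Complex \<beta> t))
    \<and> Psi_nu \<nu> z - K_star \<nu> z =
      1 / (2 * complex_of_real pi * \<i>) *
      (\<i> * (LINT t|lborel. contour_integrand \<nu> z (Complex \<beta> t)))"
proof -
  note fm = assms(1) and sets = assms(2) and b = assms(3,4,5)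
  interpret fm: finite_measure \<nu> by (rule fm)
  have sp: "space \<nu> = {0<..}"
    using sets_eq_imp_space_eq[OF sets] by (simp add: space_restrict_space)
  have Rz: "0 < Re z" using b by linarith
  show ?thesis
  proof (cases "cos (complex_of_real pi * z) = 0")
    case True
    have ci: "contour_integrand \<nu> z w = 0" for w by (simp add: contour_integrand_def True)
    have "K_star \<nu> z = Psi_nu \<nu> z"
      unfolding K_star_def Psi_nu_def
      by (intro Bochner_Integration.integral_cong refl) (simp add: sp K_ker_degenerate[OF True Rz])
    thus ?thesis by (simp add: ci)
  next
    case False
    note cz = False
    interpret p: pair_sigma_finite \<nu> lborel ..
    define G where "G = (\<lambda>l t. gg z l (Complex \<beta> t))"
    have cb: "cos (pi * \<beta>) \<noteq> 0"
    proof -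
      have "cos (pi * \<beta>) > 0" using b by (intro cos_gt_zero) (auto simp: field_simps)
      thus ?thesis by simp
    qed
    have zb: "Re z \<noteq> \<beta>" using b by simp
    define Kb where "Kb = norm (cos (complex_of_real pi * z)) * (2/\<bar>cos (pi*\<beta>)\<bar>) *
      (2/\<bar>Re z - \<beta>\<bar> + 2*norm z/(\<bar>Re z - \<beta>\<bar>*(Re z + \<beta>)))"
    have Kb0: "Kb \<ge> 0" unfolding Kb_def using b
      by (intro mult_nonneg_nonneg add_nonneg_nonneg divide_nonneg_nonneg) auto
    have Gb: "norm (G l t) \<le> Kb * exp (- pi * \<bar>t\<bar>)" if "l \<in> space \<nu>" for l t
    proof -
      have l: "l > 0" using that sp by auto
      have "norm (G l t) \<le> Kb * exp (-l*\<beta>) * exp (- pi * \<bar>t\<bar>)"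
        unfolding G_def Kb_def by (rule vline_bound[OF b(1) cb Rz zb])
      also have "\<dots> \<le> Kb * 1 * exp (- pi * \<bar>t\<bar>)"
        using l b Kb0 by (intro mult_right_mono mult_left_mono) auto
      finally show ?thesis by simp
    qed
    have Gint: "integrable lborel (G l)" for l
      unfolding G_def by (rule gg_line_integrable[OF b(1) cb Rz zb])
    have intE: "integrable lborel (\<lambda>t::real. exp (- pi * \<bar>t\<bar>))" by (rule integrable_exp_abs) simp
    have Gcont: "continuous_on UNIV (\<lambda>p::real\<times>real. G (fst p) (snd p))"
    proof -
      have c1: "cos (complex_of_real pi * Complex \<beta> t) \<noteq> 0" for t
      proof -
        have "0 < \<bar>cos (pi*\<beta>)\<bar> * (exp (pi*\<bar>t\<bar>)/2)" using cb by simp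
        hence "norm (cos (complex_of_real pi * Complex \<beta> t)) > 0"
          using cos_line[of \<beta> t] by linarith
        thus ?thesis by auto
      qed
      have c2: "z\<^sup>2 - (Complex \<beta> t)\<^sup>2 \<noteq> 0" for t
      proof
        assume "z\<^sup>2 - (Complex \<beta> t)\<^sup>2 = 0"
        hence "(z - Complex \<beta> t) * (z + Complex \<beta> t) = 0" by (simp add: power2_eq_square algebra_simps)
        hence "z = Complex \<beta> t \<or> z = - Complex \<beta> t" by (auto simp: add_eq_0_iff2)
        thus False using b by auto
      qed
      show ?thesis unfolding G_def gg_def
        by (intro continuous_intros) (use c1 c2 in auto)
    qed
    have idm: "(\<lambda>x::real. x) \<in> \<nu> \<rightarrow>\<^sub>M borel"
      unfolding measurable_cong_sets[OF sets refl] by (rule measurable_restrict_space1) simp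
    have pm: "(\<lambda>p. p) \<in> (\<nu> \<Otimes>\<^sub>M lborel) \<rightarrow>\<^sub>M (borel :: (real \<times> real) measure)"
    proof -
      have "(\<lambda>p. (fst p, snd p)) \<in> (\<nu> \<Otimes>\<^sub>M lborel) \<rightarrow>\<^sub>M (borel \<Otimes>\<^sub>M borel)"
        using idm by (intro measurable_Pair) (auto intro: measurable_compose[OF measurable_fst] measurable_compose[OF measurable_snd])
      thus ?thesis by (simp add: borel_prod)
    qed
    have Gm: "(\<lambda>p. G (fst p) (snd p)) \<in> borel_measurable (\<nu> \<Otimes>\<^sub>M lborel)"
      using measurable_compose[OF pm borel_measurable_continuous_onI[OF Gcont]] by simp
    have Gprod: "integrable (\<nu> \<Otimes>\<^sub>M lborel) (\<lambda>(l, t). G l t)"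
    proof -
      have "integrable (\<nu> \<Otimes>\<^sub>M lborel) (\<lambda>p. G (fst p) (snd p))"
      proof (rule p.Fubini_integrable)
        show "(\<lambda>p. G (fst p) (snd p)) \<in> borel_measurable (\<nu> \<Otimes>\<^sub>M lborel)" by (rule Gm)
        show "integrable \<nu> (\<lambda>x. LINT y|lborel. norm (G (fst (x, y)) (snd (x, y))))"
        proof (rule fm.integrable_const_bound[where B="Kb * (LINT t|lborel. exp (- pi * \<bar>t\<bar>))"])
          show "AE x in \<nu>. norm (LINT y|lborel. norm (G (fst (x, y)) (snd (x, y)))) \<le> Kb * (LINT t|lborel. exp (- pi * \<bar>t\<bar>))"
          proof (rule AE_I2)
            fix x assume x: "x \<in> space \<nu>"
            have "(LINT y|lborel. norm (G x y)) \<le> (LINT y|lborel. Kb * exp (- pi * \<bar>y\<bar>))"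
              using Gint intE Gb[OF x] by (intro integral_mono) auto
            moreover have "(LINT y|lborel. norm (G x y)) \<ge> 0" by (intro integral_nonneg_AE) auto
            ultimately show "norm (LINT y|lborel. norm (G (fst (x, y)) (snd (x, y)))) \<le> Kb * (LINT t|lborel. exp (- pi * \<bar>t\<bar>))"
              by simp
          qed
          show "(\<lambda>x. LINT y|lborel. norm (G (fst (x, y)) (snd (x, y)))) \<in> borel_measurable \<nu>"
            using lborel.borel_measurable_lebesgue_integral[of "\<lambda>x y. norm (G x y)" \<nu>] Gm by simp
        qed
        show "AE x in \<nu>. integrable lborel (\<lambda>y. G (fst (x, y)) (snd (x, y)))"
          using Gint by simp
      qed
      thus ?thesis by (simp add: case_prod_beta')
    qed
    have ci: "contour_integrand \<nu> z (Complex \<beta> t) = (LINT l|\<nu>. G l t)" for t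
      unfolding contour_integrand_def Psi_nu_def G_def gg_def by simp
    have int1: "integrable lborel (\<lambda>t. LINT l|\<nu>. G l t)"
      by (rule p.integrable_snd[OF Gprod])
    have fub: "(LINT t|lborel. LINT l|\<nu>. G l t) = (LINT l|\<nu>. LINT t|lborel. G l t)"
      by (rule p.Fubini_integral[OF Gprod])
    have int2: "integrable \<nu> (\<lambda>l. LINT t|lborel. G l t)"
      by (rule p.integrable_fst[OF Gprod])
    have pw: "(LINT t|lborel. G l t) = 2*pi*(exp (- (complex_of_real l * z)) - K_ker l z)" if "l \<in> space \<nu>" for l
      unfolding G_def using that sp by (intro pointwise[OF _ b cz]) auto
    have expm: "(\<lambda>l. exp (- (complex_of_real l * z))) \<in> borel_measurable \<nu>"
      using measurable_compose[OF idm, of "\<lambda>l. exp (- (complex_of_real l * z))"]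
      by (simp add: borel_measurable_continuous_onI continuous_intros)
    have intexp: "integrable \<nu> (\<lambda>l. exp (- (complex_of_real l * z)))"
    proof (rule fm.integrable_const_bound[where B=1])
      show "AE x in \<nu>. norm (exp (- (complex_of_real x * z))) \<le> 1"
        using Rz sp by (intro AE_I2) (auto simp: mult_nonneg_nonneg)
    qed (rule expm)
    have Kint: "integrable \<nu> (\<lambda>l. K_ker l z)"
    proof -
      have "integrable \<nu> (\<lambda>l. exp (- (complex_of_real l * z)) - (1 / (2*pi)) * (LINT t|lborel. G l t))"
        using intexp int2 by (intro Bochner_Integration.integrable_diff integrable_mult_right)
      moreover have "integrable \<nu> (\<lambda>l. exp (- (complex_of_real l * z)) - (1 / (2*pi)) * (LINT t|lborel. G l t))
          = integrable \<nu> (\<lambda>l. K_ker l z)"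
      proof (rule Bochner_Integration.integrable_cong[OF refl])
        fix l assume "l \<in> space \<nu>"
        thus "exp (- (complex_of_real l * z)) - (1 / (2*pi)) * (LINT t|lborel. G l t) = K_ker l z"
          using pw by (simp add: field_simps)
      qed
      ultimately show ?thesis by simp
    qed
    have "Psi_nu \<nu> z - K_star \<nu> z = (LINT l|\<nu>. exp (- (complex_of_real l * z)) - K_ker l z)"
      unfolding Psi_nu_def K_star_def by (rule Bochner_Integration.integral_diff[OF intexp Kint, symmetric])
    also have "\<dots> = (LINT l|\<nu>. (1 / (2*pi)) * (LINT t|lborel. G l t))"
      by (intro Bochner_Integration.integral_cong refl) (simp add: pw)
    also have "\<dots> = (1 / (2*pi)) * (LINT t|lborel. LINT l|\<nu>. G l t)"
      by (simp add: fub)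
    also have "\<dots> = 1 / (2 * complex_of_real pi * \<i>) * (\<i> * (LINT t|lborel. contour_integrand \<nu> z (Complex \<beta> t)))"
      by (simp add: ci)
    finally show ?thesis using int1 by (simp add: ci)
  qed
qed

end
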